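(* Let $n,k\in\mathbb{N}$ with $1\le k\le n-1$. The map sending a weakly decreasing $\alpha=(a_1,\dots,a_n)\in PF_{n,k}$ (i.e. $a_1\ge a_2\ge\dots\ge a_n$) to the lattice path from $(0,n)$ to $(n,0)$ whose $i$-th east step goes from $(i-1,a_i-1)$ to $(i,a_i-1)$ for each $1\le i\le n$ (consecutive east steps joined by south steps) is a bijection from the set of weakly decreasing $k$-Naples parking functions of length $n$ onto the set of $k$-lattice paths of length $2n$. Equivalently, a weakly decreasing $\alpha\in[n]^n$ lies in $PF_{n,k}$ if and only if $a_i\le \min(n,\,n+k+1-i)$ for all $1\le i\le n$.
   Context: For $n\in\mathbb{N}$ let $[n]=\{1,\dots,n\}$ and $PP_n=[n]^n$. For an integer $k\ge 0$, the $k$-Naples parking rule: there are $n$ spots numbered $1,\dots,n$ west to east, initially empty; cars $c_1,\dots,c_n$ arrive in order, car $c_i$ preferring spot $a_i$. If spot $a_i$ is empty, $c_i$ parks there. Otherwise $c_i$ checks spots $a_i-1,\dots,a_i-k$ in this order (skipping those $<1$) and parks in the first empty one; if all are occupied, it drives east and parks in the first empty spot numbered greater than $a_i$, failing to park if none exists. $PF_{n,k}$ is the set of $\alpha\in PP_n$ for which all cars park. A $k$-lattice path of length $2n$ is a lattice path from $(0,n)$ to $(n,0)$ consisting of $n$ unit east steps $(1,0)$ and $n$ unit south steps $(0,-1)$, whose first step is a south step (so every east step lies at height at most $n-1$), and which never goes strictly above the line $y=n-x+k$; equivalently, if its $i$-th east step is at height $h_i$, then $n-1\ge h_1\ge h_2\ge\dots\ge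 h_n\ge 0$ and $h_i\le n-i+k$ for all $i$. *)

theory Defs
  imports Main
begin

text \<open>If a is occupied, the
  car checks a-1, ..., a-k (skipping spots < 1) in this order, i.e. it takes the
  largest empty spot in that window; otherwise it takes the first empty spot east of a.\<close>
definition naples_spot :: "nat \<Rightarrow> nat \<Rightarrow> nat set \<Rightarrow> nat \<Rightarrow> nat option" where
  "naples_spot n k S a =
     (if a \<notin> S then Some a
      else (let B = {j. 1 \<le> j \<and> a - k \<le> j \<and> j < a \<and> j \<notin> S} in
            if B \<noteq> {} then Some (Max B)
            else (let C = {j. a < j \<and> j \<le> n \<and> j \<notin> S} in
                  if C \<noteq> {} then Some (Min C) else None)))"

fun naples_parks :: "nat \<Rightarrow> nat \<Rightarrow> nat set \<Rightarrow> nat list \<Rightarrow> bool" where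
  "naples_parks n k S [] = True"
| "naples_parks n k S (a # as) =
     (case naples_spot n k S a of
        None \<Rightarrow> False
      | Some j \<Rightarrow> naples_parks n k (insert j S) as)"

definition PP :: "nat \<Rightarrow> nat list set" where
  "PP n = {\<alpha>. length \<alpha> = n \<and> set \<alpha> \<subseteq> {1..n}}"

definition PF :: "nat \<Rightarrow> nat \<Rightarrow> nat list set" where
  "PF n k = {\<alpha> \<in> PP n. naples_parks n k {} \<alpha>}"

datatype step = East | South

text \<open>A k-lattice path of length 2n: a list of steps starting at (0,n); after a prefix
  with e east steps and s south steps we are at (e, n - s).\<close>
definition k_lattice_path :: "nat \<Rightarrow> nat \<Rightarrow> step list \<Rightarrow> bool" where
  "k_lattice_path n k p \<longleftrightarrow>
     length p = 2 * n \<and> count_list p East = n \<and> count_list p South = n \<and>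
     p \<noteq> [] \<and> hd p = South \<and>
     (\<forall>j \<le> length p.
        int n - int (count_list (take j p) South)
          \<le> int n - int (count_list (take j p) East) + int k)"

fun path_from_heights :: "nat \<Rightarrow> nat list \<Rightarrow> step list" where
  "path_from_heights y [] = replicate y South"
| "path_from_heights y (h # hs) = replicate (y - h) South @ East # path_from_heights h hs"

definition pf_to_path :: "nat \<Rightarrow> nat list \<Rightarrow> step list" where
  "pf_to_path n \<alpha> = path_from_heights n (map (\<lambda>a. a - 1) \<alpha>)"

end

theory Submission
  imports Defs
begin

section \<open>Parking part\<close>

lemma spot_Some:
  assumes "naples_spot n k S a = Some j" "1 \<le> a" "a \<le> n"
  shows "j \<notin> S \<and> 1 \<le> j \<and> j \<le> n \<and> a - k \<le> j"
proof (cases "a \<in> S")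
  case False
  then show ?thesis using assms by (simp add: naples_spot_def)
next
  case True
  define B where "B = {j. 1 \<le> j \<and> a - k \<le> j \<and> j < a \<and> j \<notin> S}"
  define C where "C = {j. a < j \<and> j \<le> n \<and> j \<notin> S}"
  have fB: "finite B" unfolding B_def by (rule finite_subset[of _ "{..<a}"]) auto
  have fC: "finite C" unfolding C_def by (rule finite_subset[of _ "{..n}"]) auto
  have eq: "naples_spot n k S a = (if B \<noteq> {} then Some (Max B) else if C \<noteq> {} then Some (Min C) else None)"
    unfolding naples_spot_def B_def C_def Let_def using True by simp
  show ?thesis
  proof (cases "B = {}")
    case False
    then have "j = Max B" using assms eq by simp
    then have "j \<in> B" using fB False by simp
    then show ?thesis using assms unfolding B_def by auto
  next
    case Bn: True
    show ?thesis
    proof (cases "C = {}")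
      case False
      then have "j = Min C" using assms eq Bn by simp
      then have "j \<in> C" using fC False by simp
      then show ?thesis using assms unfolding C_def by auto
    next
      case True
      then show ?thesis using assms eq Bn by simp
    qed
  qed
qed

lemma spot_None:
  assumes "naples_spot n k S a = None"
  shows "{max 1 (a - k)..n} \<subseteq> S"
proof
  fix x assume x: "x \<in> {max 1 (a - k)..n}"
  have aS: "a \<in> S" using assms by (auto simp: naples_spot_def split: if_splits)
  have B: "{j. 1 \<le> j \<and> a - k \<le> j \<and> j < a \<and> j \<notin> S} = {}"
    using assms aS by (auto simp: naples_spot_def Let_def split: if_splits)
  have C: "{j. a < j \<and> j \<le> n \<and> j \<notin> S} = {}"
    using assms aS B by (auto simp: naples_spot_def Let_def split: if_splits)
  show "x \<in> S"
  proof -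
    consider "x < a" | "x = a" | "x > a" by linarith
    then show ?thesis
    proof cases
      case 1 then show ?thesis using B x by auto
    next
      case 2 then show ?thesis using aS by simp
    next
      case 3 then show ?thesis using C x by auto
    qed
  qed
qed

lemma suff:
  assumes "finite S" "card S + length as \<le> n" "set as \<subseteq> {1..n}"
    "\<forall>i < length as. as ! i \<le> n + k - (card S + i)"
  shows "naples_parks n k S as"
  using assms
proof (induction as arbitrary: S)
  case Nil
  then show ?case by simp
next
  case (Cons a as)
  have a: "1 \<le> a" "a \<le> n" using Cons.prems by auto
  have abound: "a \<le> n + k - card S" using Cons.prems(4) by (metis add_0_right length_greater_0_conv list.distinct(1) nth_Cons_0)
  show ?case
  proof (cases "naples_spot n k S a")
    case None
    then have sub: "{max 1 (a - k)..n} \<subseteq> S" by (rule spot_None)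
    have "card {max 1 (a - k)..n} \<le> card S" using card_mono[OF Cons.prems(1) sub] .
    then have "Suc n - max 1 (a - k) \<le> card S" by simp
    moreover have "card S + 1 \<le> n" using Cons.prems(2) by simp
    ultimately have False using abound a by (cases "1 \<le> a - k") (auto simp: max_def split: if_splits)
    then show ?thesis ..
  next
    case (Some j)
    have j: "j \<notin> S" "1 \<le> j" "j \<le> n" using spot_Some[OF Some a] by auto
    have cj: "card (insert j S) = Suc (card S)" using j Cons.prems(1) by simp
    have "naples_parks n k (insert j S) as"
    proof (rule Cons.IH)
      show "finite (insert j S)" using Cons.prems(1) by simp
      show "card (insert j S) + length as \<le> n" using cj Cons.prems(2) by simp
      show "set as \<subseteq> {1..n}" using Cons.prems(3) by simp
      show "\<forall>i<length as. as ! i \<le> n + k - (card (insert j S) + i)"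
      proof (intro allI impI)
        fix i assume "i < length as"
        then have "(a # as) ! Suc i \<le> n + k - (card S + Suc i)" by (intro Cons.prems(4)[rule_format]) simp
        then show "as ! i \<le> n + k - (card (insert j S) + i)" using cj by simp
      qed
    qed
    then show ?thesis using Some by simp
  qed
qed

lemma necc:
  assumes "naples_parks n k S as" "finite S" "set as \<subseteq> {1..n}" "sorted_wrt (\<ge>) as"
    "i < length as"
  shows "card (S \<inter> {as ! i - k..n}) + i + 1 \<le> Suc n - (as ! i - k)"
  using assms
proof (induction as arbitrary: S i)
  case Nil
  then show ?case by simp
next
  case (Cons a as)
  have a: "1 \<le> a" "a \<le> n" using Cons.prems by auto
  obtain j where Some: "naples_spot n k S a = Some j" and P: "naples_parks n k (insert j S) as"
    using Cons.prems(1) by (auto split: option.splits)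
  have j: "j \<notin> S" "1 \<le> j" "j \<le> n" "a - k \<le> j" using spot_Some[OF Some a] by auto
  show ?case
  proof (cases i)
    case 0
    have sub: "insert j (S \<inter> {a - k..n}) \<subseteq> {a - k..n}" using j by auto
    have "card (insert j (S \<inter> {a - k..n})) \<le> card {a - k..n}"
      by (rule card_mono[OF _ sub]) simp
    then show ?thesis using 0 j Cons.prems(2) by simp
  next
    case (Suc i')
    have i': "i' < length as" using Cons.prems(5) Suc by simp
    have IH: "card (insert j S \<inter> {as ! i' - k..n}) + i' + 1 \<le> Suc n - (as ! i' - k)"
      using Cons.IH[OF P _ _ _ i'] Cons.prems by simp
    have "as ! i' \<le> a" using Cons.prems(4) i' by (simp add: sorted_wrt_iff_nth_less)
      (metis (no_types) Cons.prems(4) nth_mem sorted_wrt.simps(2))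
    then have "j \<in> {as ! i' - k..n}" using j by auto
    then have "insert j S \<inter> {as ! i' - k..n} = insert j (S \<inter> {as ! i' - k..n})" by auto
    then have "card (insert j S \<inter> {as ! i' - k..n}) = Suc (card (S \<inter> {as ! i' - k..n}))"
      using j Cons.prems(2) by simp
    then show ?thesis using IH Suc by simp
  qed
qed

lemma char_parks:
  assumes "length as = n" "set as \<subseteq> {1..n}" "sorted_wrt (\<ge>) as"
  shows "naples_parks n k {} as \<longleftrightarrow> (\<forall>i < n. as ! i \<le> n + k - i)"
proof
  assume H: "naples_parks n k {} as"
  show "\<forall>i < n. as ! i \<le> n + k - i"
  proof (intro allI impI)
    fix i assume i: "i < n"
    have "card ({} \<inter> {as ! i - k..n}) + i + 1 \<le> Suc n - (as ! i - k)"
      using necc[OF H _ assms(2,3)] i assms(1) by simp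
    moreover have "as ! i \<le> n" using assms i by (meson atLeastAtMost_iff nth_mem subsetD)
    ultimately show "as ! i \<le> n + k - i" using i by simp
  qed
next
  assume "\<forall>i < n. as ! i \<le> n + k - i"
  then show "naples_parks n k {} as" using assms by (intro suff) auto
qed

section \<open>Path part\<close>

definition cond :: "int \<Rightarrow> step list \<Rightarrow> bool" where
  "cond d p \<longleftrightarrow> (\<forall>j \<le> length p. int (count_list (take j p) East) \<le> int (count_list (take j p) South) + d)"

lemma all_le_Suc_iff: "(\<forall>j\<le>Suc m. P j) \<longleftrightarrow> P 0 \<and> (\<forall>j\<le>m. P (Suc j))"
  apply auto
  subgoal for j by (cases j) auto
  done

lemma cond_Nil: "cond d [] \<longleftrightarrow> d \<ge> 0" by (simp add: cond_def)

lemma cond_nonneg: "cond d p \<Longrightarrow> d \<ge> 0"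
  unfolding cond_def by (metis le0 list.size(3) take_0 count_list.simps(1) of_nat_0 add_0 )

lemma cond_Cons: "cond d (x # p) \<longleftrightarrow> d \<ge> 0 \<and> cond (if x = East then d - 1 else d + 1) p"
  unfolding cond_def
  by (cases x) (auto simp: all_le_Suc_iff algebra_simps)

lemma cond_rep: "cond d (replicate m South @ q) \<longleftrightarrow> d \<ge> 0 \<and> cond (d + int m) q"
proof (induction m arbitrary: d)
  case 0
  then show ?case using cond_nonneg by auto
next
  case (Suc m)
  show ?case by (auto simp: cond_Cons Suc algebra_simps)
qed

lemma cond_pfh:
  assumes "sorted_wrt (\<ge>) hs" "\<forall>h\<in>set hs. h \<le> y"
  shows "cond d (path_from_heights y hs) \<longleftrightarrow>
     d \<ge> 0 \<and> (\<forall>i<length hs. d + int y - int (hs ! i) - int i - 1 \<ge> 0)"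
  using assms
proof (induction hs arbitrary: y d)
  case Nil
  then show ?case using cond_rep[of d y "[]"] by (auto simp: cond_Nil)
next
  case (Cons h hs)
  have hy: "h \<le> y" using Cons.prems by simp
  have IH: "cond e (path_from_heights h hs) \<longleftrightarrow>
     e \<ge> 0 \<and> (\<forall>i<length hs. e + int h - int (hs ! i) - int i - 1 \<ge> 0)" for e
    using Cons.IH[of h e] Cons.prems by auto
  have "cond d (path_from_heights y (h # hs)) \<longleftrightarrow>
     d \<ge> 0 \<and> d + int y - int h \<ge> 0 \<and> cond (d + int y - int h - 1) (path_from_heights h hs)"
    using hy by (simp add: cond_rep cond_Cons of_nat_diff algebra_simps)
  also have "\<dots> \<longleftrightarrow> d \<ge> 0 \<and> d + int y - int h - 1 \<ge> 0 \<and>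
     (\<forall>i<length hs. d + int y - int (hs ! i) - int (Suc i) - 1 \<ge> 0)"
    using IH by auto
  also have "\<dots> \<longleftrightarrow> d \<ge> 0 \<and> (\<forall>i<length (h # hs). d + int y - int ((h#hs) ! i) - int i - 1 \<ge> 0)"
    by (simp only: length_Cons All_less_Suc2 nth_Cons_0 nth_Cons_Suc) simp
  finally show ?case .
qed

lemma counts_pfh:
  assumes "sorted_wrt (\<ge>) hs" "\<forall>h\<in>set hs. h \<le> y"
  shows "count_list (path_from_heights y hs) South = y \<and> count_list (path_from_heights y hs) East = length hs"
  using assms
proof (induction hs arbitrary: y)
  case Nil
  then show ?case by (induction y) auto
next
  case (Cons h hs)
  have "count_list (replicate m South) South = m" "count_list (replicate m South) East = 0" for m
    by (induction m) auto
  then show ?case using Cons by auto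
qed

lemma length_steps: "length (p :: step list) = count_list p South + count_list p East"
  by (induction p) (auto, metis step.exhaust)

fun heights :: "nat \<Rightarrow> step list \<Rightarrow> nat list" where
  "heights y [] = []"
| "heights y (South # p) = heights (y - 1) p"
| "heights y (East # p) = y # heights y p"

lemma heights_le: "\<forall>h\<in>set (heights y p). h \<le> y"
  by (induction y p rule: heights.induct) force+

lemma heights_sorted: "sorted_wrt (\<ge>) (heights y p)"
  by (induction y p rule: heights.induct) (auto simp: heights_le)

lemma heights_length: "length (heights y p) = count_list p East"
  by (induction y p rule: heights.induct) auto

lemma heights_rep: "heights y (replicate m South @ q) = heights (y - m) q"
  by (induction m arbitrary: y) simp_all

lemma heights_pfh:
  assumes "sorted_wrt (\<ge>) hs" "\<forall>h\<in>set hs. h \<le> y"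
  shows "heights y (path_from_heights y hs) = hs"
  using assms
proof (induction hs arbitrary: y)
  case Nil
  then show ?case using heights_rep[of y y "[]"] by simp
next
  case (Cons h hs)
  then show ?case by (simp add: heights_rep)
qed

lemma pfh_heights:
  assumes "count_list p South = y"
  shows "path_from_heights y (heights y p) = p"
  using assms
proof (induction y p rule: heights.induct)
  case (1 y)
  then show ?case by simp
next
  case (2 y p)
  obtain y' where y: "y = Suc y'" using 2(2) by (cases y) auto
  have IH: "path_from_heights y' (heights y' p) = p" using 2 y by simp
  have le: "\<forall>h\<in>set (heights y' p). h \<le> y'" by (rule heights_le)
  have "path_from_heights (Suc y') hs = South # path_from_heights y' hs"
    if "\<forall>h\<in>set hs. h \<le> y'" for hs
    using that by (cases hs) (auto simp: Suc_diff_le)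
  then show ?case using IH le y by simp
next
  case (3 y p)
  then show ?case by simp
qed

theorem theorem1p3:
  fixes n k :: nat
  assumes "1 \<le> k" and "k \<le> n - 1"
  shows "bij_betw (pf_to_path n)
           {\<alpha> \<in> PF n k. sorted_wrt (\<ge>) \<alpha>}
           {p. k_lattice_path n k p}
         \<and> (\<forall>\<alpha> \<in> PP n. sorted_wrt (\<ge>) \<alpha> \<longrightarrow>
              (\<alpha> \<in> PF n k \<longleftrightarrow> (\<forall>i \<in> {1..n}. \<alpha> ! (i - 1) \<le> min n (n + k + 1 - i))))"
proof
  have n2: "n \<ge> 2" using assms by simp
  have A: "{\<alpha> \<in> PF n k. sorted_wrt (\<ge>) \<alpha>} =
    {\<alpha>. length \<alpha> = n \<and> set \<alpha> \<subseteq> {1..n} \<and> sorted_wrt (\<ge>) \<alpha> \<and> (\<forall>i < n. \<alpha> ! i \<le> n + k - i)}"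
    using char_parks by (auto simp: PF_def PP_def)
  have klp: "k_lattice_path n k p \<longleftrightarrow> length p = 2 * n \<and> count_list p East = n \<and>
     count_list p South = n \<and> p \<noteq> [] \<and> hd p = South \<and> cond (int k) p" for p
    unfolding k_lattice_path_def cond_def by auto
  define g where "g p = map Suc (heights n p)" for p
  show "bij_betw (pf_to_path n) {\<alpha> \<in> PF n k. sorted_wrt (\<ge>) \<alpha>} {p. k_lattice_path n k p}"
    unfolding A
  proof (rule bij_betw_byWitness[where f' = g])
    show "\<forall>a\<in>{\<alpha>. length \<alpha> = n \<and> set \<alpha> \<subseteq> {1..n} \<and> sorted_wrt (\<ge>) \<alpha> \<and> (\<forall>i<n. \<alpha> ! i \<le> n + k - i)}.
       g (pf_to_path n a) = a"
    proof
      fix a assume a: "a \<in> {\<alpha>. length \<alpha> = n \<and> set \<alpha> \<subseteq> {1..n} \<and> sorted_wrt (\<ge>) \<alpha> \<and> (\<forall>i<n. \<alpha> ! i \<le> n + k - i)}"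
      have s: "sorted_wrt (\<ge>) (map (\<lambda>a. a - 1) a)" using a
        by (auto simp: sorted_wrt_map elim!: sorted_wrt_mono_rel[rotated])
      have l: "\<forall>h\<in>set (map (\<lambda>a. a - 1) a). h \<le> n" using a by (force simp: subset_iff)
      have "g (pf_to_path n a) = map Suc (map (\<lambda>a. a - 1) a)"
        unfolding g_def pf_to_path_def heights_pfh[OF s l] ..
      also have "\<dots> = a" using a by (auto intro!: map_idI)
      finally show "g (pf_to_path n a) = a" .
    qed
    show "\<forall>p\<in>{p. k_lattice_path n k p}. pf_to_path n (g p) = p"
    proof
      fix p assume "p \<in> {p. k_lattice_path n k p}"
      then have "count_list p South = n" by (simp add: klp)
      then show "pf_to_path n (g p) = p"
        unfolding g_def pf_to_path_def by (simp add: comp_def pfh_heights)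
    qed
    show "pf_to_path n ` {\<alpha>. length \<alpha> = n \<and> set \<alpha> \<subseteq> {1..n} \<and> sorted_wrt (\<ge>) \<alpha> \<and> (\<forall>i<n. \<alpha> ! i \<le> n + k - i)}
       \<subseteq> {p. k_lattice_path n k p}"
    proof
      fix p assume "p \<in> pf_to_path n ` {\<alpha>. length \<alpha> = n \<and> set \<alpha> \<subseteq> {1..n} \<and> sorted_wrt (\<ge>) \<alpha> \<and> (\<forall>i<n. \<alpha> ! i \<le> n + k - i)}"
      then obtain a where a: "length a = n" "set a \<subseteq> {1..n}" "sorted_wrt (\<ge>) a"
        "\<forall>i<n. a ! i \<le> n + k - i" and p: "p = pf_to_path n a" by auto
      define hs where "hs = map (\<lambda>a. a - 1) a"
      have s: "sorted_wrt (\<ge>) hs" using a unfolding hs_def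
        by (auto simp: sorted_wrt_map elim!: sorted_wrt_mono_rel[rotated])
      have l: "\<forall>h\<in>set hs. h \<le> n" using a unfolding hs_def by (force simp: subset_iff)
      have p': "p = path_from_heights n hs" using p unfolding pf_to_path_def hs_def by simp
      have lh: "length hs = n" using a unfolding hs_def by simp
      have cnt: "count_list p South = n" "count_list p East = n" using counts_pfh[OF s l] p' lh by auto
      have len: "length p = 2 * n" using length_steps[of p] cnt by simp
      obtain h hs' where hh: "hs = h # hs'" using lh n2 by (cases hs) auto
      have "0 < length a" using a n2 by simp
      then have "a ! 0 \<in> set a" by simp
      then have "a ! 0 \<le> n" using a(2) by auto
      then have "h < n" using hh n2 unfolding hs_def by (cases a) auto
      then have hd: "hd p = South" using p' hh by (cases "n - h") auto
      have c: "cond (int k) p"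
        unfolding p' cond_pfh[OF s l]
      proof (intro conjI allI impI)
        fix i assume i: "i < length hs"
        then have ia: "i < length a" using lh a(1) by simp
        then have "a ! i \<in> set a" by simp
        then have "a ! i \<in> {1..n}" using a(2) by blast
        then have "a ! i \<le> n + k - i" "1 \<le> a ! i" using a(4) ia a(1) by auto
        moreover have "hs ! i = a ! i - 1" using i unfolding hs_def by simp
        ultimately show "0 \<le> int k + int n - int (hs ! i) - int i - 1" using i lh by simp
      qed simp
      have "p \<noteq> []" using len n2 by auto
      then show "p \<in> {p. k_lattice_path n k p}" unfolding mem_Collect_eq klp using cnt len hd c by simp
    qed
    show "g ` {p. k_lattice_path n k p} \<subseteq>
       {\<alpha>. length \<alpha> = n \<and> set \<alpha> \<subseteq> {1..n} \<and> sorted_wrt (\<ge>) \<alpha> \<and> (\<forall>i<n. \<alpha> ! i \<le> n + k - i)}"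
    proof
      fix a assume "a \<in> g ` {p. k_lattice_path n k p}"
      then obtain p where p: "k_lattice_path n k p" and a: "a = g p" by auto
      have pk: "length p = 2 * n" "count_list p East = n" "count_list p South = n" "p \<noteq> []"
        "hd p = South" "cond (int k) p" using p unfolding klp by simp_all
      obtain p' where pp: "p = South # p'" using pk(4,5) by (cases p) auto
      have hn: "heights n p = heights (n - 1) p'" using pp by simp
      have le: "\<forall>h\<in>set (heights n p). h \<le> n - 1" using hn heights_le by metis
      have s: "sorted_wrt (\<ge>) (heights n p)" by (rule heights_sorted)
      have le2: "\<forall>h\<in>set (heights n p). h \<le> n" using le by auto
      have lh: "length (heights n p) = n" using heights_length pk by simp
      have c: "cond (int k) (path_from_heights n (heights n p))" using pfh_heights[OF pk(3)] pk(6) by simp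
      have ci: "\<forall>i<n. 0 \<le> int k + int n - int (heights n p ! i) - int i - 1"
        using c unfolding cond_pfh[OF s le2] lh by simp
      show "a \<in> {\<alpha>. length \<alpha> = n \<and> set \<alpha> \<subseteq> {1..n} \<and> sorted_wrt (\<ge>) \<alpha> \<and> (\<forall>i<n. \<alpha> ! i \<le> n + k - i)}"
      proof (intro CollectI conjI allI impI)
        show "length a = n" using a lh g_def by simp
        show "set a \<subseteq> {1..n}" using a le g_def n2 by auto
        show "sorted_wrt (\<ge>) a" using a s g_def by (simp add: sorted_wrt_map)
        fix i assume i: "i < n"
        then show "a ! i \<le> n + k - i" using a g_def lh ci[rule_format, OF i] by simp
      qed
    qed
  qed
next
  show "\<forall>\<alpha> \<in> PP n. sorted_wrt (\<ge>) \<alpha> \<longrightarrow>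
              (\<alpha> \<in> PF n k \<longleftrightarrow> (\<forall>i \<in> {1..n}. \<alpha> ! (i - 1) \<le> min n (n + k + 1 - i)))"
  proof (intro ballI impI)
    fix a assume a: "a \<in> PP n" "sorted_wrt (\<ge>) a"
    have l: "length a = n" "set a \<subseteq> {1..n}" using a by (auto simp: PP_def)
    have "a \<in> PF n k \<longleftrightarrow> (\<forall>i < n. a ! i \<le> n + k - i)"
      using char_parks[OF l a(2)] a by (simp add: PF_def)
    also have "\<dots> \<longleftrightarrow> (\<forall>i \<in> {1..n}. a ! (i - 1) \<le> min n (n + k + 1 - i))"
    proof
      assume H: "\<forall>i < n. a ! i \<le> n + k - i"
      show "\<forall>i \<in> {1..n}. a ! (i - 1) \<le> min n (n + k + 1 - i)"
      proof
        fix i assume i: "i \<in> {1..n}"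
        have A1: "a ! (i - 1) \<le> n" using l i by (metis atLeastAtMost_iff diff_less less_le_trans nth_mem subsetD zero_less_one)
        have "i - 1 < n" using i by auto
        then have A2: "a ! (i - 1) \<le> n + k - (i - 1)" using H by blast
        from A1 A2 show "a ! (i - 1) \<le> min n (n + k + 1 - i)" using i by auto
      qed
    next
      assume H: "\<forall>i \<in> {1..n}. a ! (i - 1) \<le> min n (n + k + 1 - i)"
      show "\<forall>i < n. a ! i \<le> n + k - i"
      proof (intro allI impI)
        fix i assume i: "i < n"
        then have "Suc i \<in> {1..n}" by simp
        then have "a ! (Suc i - 1) \<le> min n (n + k + 1 - Suc i)" using H by blast
        then show "a ! i \<le> n + k - i" by simp
      qed
    qed
    finally show "a \<in> PF n k \<longleftrightarrow> (\<forall>i \<in> {1..n}. a ! (i - 1) \<le> min n (n + k + 1 - i))" .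
  qed
qed

end
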